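(* Let $p$ be a prime and let $a,b\in\mathbb{C}_p$ with $a\neq0$, $b\neq0$, $a\neq b$ and $|a|_p<|b|_p$. Let $P=-\frac1b$, $D=\mathbb{C}_p\setminus\{P\}$, $f(x)=\frac{ax^2}{bx+1}$ on $D$, and $x_1=0$ (a fixed point of $f$). For $n\geq 0$ put $r_n=\frac{|b|_p^{n-1}}{|a|_p^{n}}$, and put $l_0=0$ and $l_{n+1}=\frac{|a|_p^{n}}{|b|_p^{n+1}}$ for $n\ge 0$. Then $$D\setminus\Big(\bigcup_{i=1}^{\infty}S_{r_i}(x_1)\cup\bigcup_{j=0}^{\infty}S_{l_j}(P)\Big)\subseteq A(x_1).$$
   Context: $\mathbb{C}_p$ is the field of complex $p$-adic numbers with $p$-adic norm $|\cdot|_p$. For $c\in\mathbb{C}_p$ and $r\ge 0$, $S_r(c)=\{x\in\mathbb{C}_p:|x-c|_p=r\}$. For $y\in D$ write $y^{(n)}=f^n(y)$ (the $n$-th iterate, where defined, i.e. as long as no earlier iterate equals $P$). For a fixed point $x^{(0)}$ of $f$, its basin of attraction is $A(x^{(0)})=\{y: y^{(n)}\text{ is defined for all }n\text{ and }y^{(n)}\to x^{(0)}\text{ as }n\to\infty\}$. *)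

theory Defs
  imports "HOL-Analysis.Analysis" "HOL-Computational_Algebra.Primes"
begin

text \<open>Axiomatic characterisation of the field of complex p-adic numbers C_p:
  a field K with a non-archimedean absolute value nrm which restricts to the
  p-adic absolute value on the integers (hence K has characteristic 0 and
  contains Q with its p-adic absolute value), which is complete, algebraically
  closed, and in which the algebraic numbers (over Q) are dense.
  These properties determine (K, nrm) up to isometric isomorphism as C_p.\<close>

definition nonarch_abs :: "('a::field \<Rightarrow> real) \<Rightarrow> bool" where
  "nonarch_abs nrm \<longleftrightarrow>
     (\<forall>x. 0 \<le> nrm x) \<and> (\<forall>x. nrm x = 0 \<longleftrightarrow> x = 0) \<and>
     (\<forall>x y. nrm (x * y) = nrm x * nrm y) \<and>
     (\<forall>x y. nrm (x + y) \<le> max (nrm x) (nrm y))"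

definition algebraic_over_Q :: "'a::field \<Rightarrow> bool" where
  "algebraic_over_Q y \<longleftrightarrow>
     (\<exists>(c::nat \<Rightarrow> int) n. (\<exists>i\<le>n. c i \<noteq> 0) \<and> (\<Sum>i\<le>n. of_int (c i) * y ^ i) = 0)"

definition is_Cp :: "nat \<Rightarrow> ('a::field \<Rightarrow> real) \<Rightarrow> bool" where
  "is_Cp p nrm \<longleftrightarrow>
     nonarch_abs nrm \<and>
     (\<forall>k::int. k \<noteq> 0 \<longrightarrow> nrm (of_int k) = inverse (real p ^ multiplicity (int p) k)) \<and>
     (\<forall>X::nat \<Rightarrow> 'a. (\<forall>e>0. \<exists>N. \<forall>m\<ge>N. \<forall>n\<ge>N. nrm (X m - X n) < e)
          \<longrightarrow> (\<exists>L. (\<lambda>n. nrm (X n - L)) \<longlonglongrightarrow> 0)) \<and>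
     (\<forall>(c::nat \<Rightarrow> 'a) n. n \<ge> 1 \<and> c n \<noteq> 0 \<longrightarrow> (\<exists>x. (\<Sum>i\<le>n. c i * x ^ i) = 0)) \<and>
     (\<forall>x. \<forall>e>0. \<exists>y. algebraic_over_Q y \<and> nrm (x - y) < e)"

definition psphere :: "('a::field \<Rightarrow> real) \<Rightarrow> real \<Rightarrow> 'a \<Rightarrow> 'a set" where
  "psphere nrm r c = {x. nrm (x - c) = r}"

text \<open>Basin of attraction of the fixed point x0 of f, where f is defined off the
  pole P: the iterates y^(n) = f^n(y) are defined for all n iff no iterate equals P,
  and y^(n) \<rightarrow> x0 in the topology of nrm.\<close>
definition basin :: "('a::field \<Rightarrow> real) \<Rightarrow> ('a \<Rightarrow> 'a) \<Rightarrow> 'a \<Rightarrow> 'a \<Rightarrow> 'a set" where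
  "basin nrm f P x0 =
     {y. (\<forall>n. (f ^^ n) y \<noteq> P) \<and> (\<lambda>n. nrm ((f ^^ n) y - x0)) \<longlonglongrightarrow> 0}"

end

theory Submission
  imports Defs
begin

lemma na_ge0: "nonarch_abs nrm \<Longrightarrow> 0 \<le> nrm x" unfolding nonarch_abs_def by blast
lemma na_zero: "nonarch_abs nrm \<Longrightarrow> nrm x = 0 \<longleftrightarrow> x = 0" unfolding nonarch_abs_def by blast
lemma na_mult: "nonarch_abs nrm \<Longrightarrow> nrm (x * y) = nrm x * nrm y" unfolding nonarch_abs_def by blast
lemma na_tri: "nonarch_abs nrm \<Longrightarrow> nrm (x + y) \<le> max (nrm x) (nrm y)" unfolding nonarch_abs_def by blast

lemma na_one: assumes "nonarch_abs (nrm :: 'a::field \<Rightarrow> real)" shows "nrm 1 = 1"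
proof -
  have "nrm 1 = nrm 1 * nrm 1" using na_mult[OF assms, of 1 1] by simp
  moreover have "nrm 1 \<noteq> 0" using na_zero[OF assms, of 1] by simp
  ultimately show ?thesis by simp
qed

lemma na_minus: assumes "nonarch_abs (nrm :: 'a::field \<Rightarrow> real)" shows "nrm (- x) = nrm x"
proof -
  have "nrm (-1) * nrm (-1) = 1" using na_mult[OF assms, of "-1" "-1"] na_one[OF assms] by simp
  moreover have "nrm (-1) \<ge> 0" using na_ge0[OF assms] by blast
  ultimately have "nrm (-1) = 1"
    by (metis abs_of_nonneg abs_square_eq_1 power2_eq_square)
  then show ?thesis using na_mult[OF assms, of "-1" x] by simp
qed

lemma na_div: assumes "nonarch_abs (nrm :: 'a::field \<Rightarrow> real)" shows "nrm (x / y) = nrm x / nrm y"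
proof (cases "y = 0")
  case True
  have "nrm 0 = 0" using na_zero[OF assms] by blast
  then show ?thesis using True by simp
next
  case False
  have "nrm x = nrm (x / y) * nrm y" using na_mult[OF assms, of "x/y" y] False by simp
  moreover have "nrm y \<noteq> 0" using na_zero[OF assms] False by simp
  ultimately show ?thesis by simp
qed

lemma na_strict: assumes "nonarch_abs (nrm :: 'a::field \<Rightarrow> real)" and "nrm x < nrm y"
  shows "nrm (x + y) = nrm y"
proof -
  have "nrm (x + y) \<le> nrm y" using na_tri[OF assms(1), of x y] assms(2) by simp
  moreover have "nrm y \<le> max (nrm (x + y)) (nrm (- x))" using na_tri[OF assms(1), of "x+y" "-x"] by simp
  ultimately show ?thesis using na_minus[OF assms(1)] assms(2) by auto
qed

lemma na_diff: assumes "nonarch_abs (nrm :: 'a::field \<Rightarrow> real)" and "nrm x \<noteq> nrm y"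
  shows "nrm (x - y) = max (nrm x) (nrm y)"
proof (cases "nrm x < nrm y")
  case True
  then have "nrm (x + - y) = nrm (- y)" using na_strict[OF assms(1), of x "-y"] na_minus[OF assms(1)] by simp
  then show ?thesis using True na_minus[OF assms(1)] by simp
next
  case False
  then have "nrm (-y) < nrm x" using assms na_minus[OF assms(1)] by simp
  then have "nrm (- y + x) = nrm x" using na_strict[OF assms(1)] by blast
  then show ?thesis using False by (simp add: add.commute)
qed

theorem theorem3p3:
  fixes p :: nat and nrm :: "'a::field \<Rightarrow> real" and a b :: 'a
  assumes "prime p" and "is_Cp p nrm"
    and "a \<noteq> 0" and "b \<noteq> 0" and "a \<noteq> b" and "nrm a < nrm b"
  defines "P \<equiv> - 1 / b"
    and "f \<equiv> (\<lambda>x. a * x ^ 2 / (b * x + 1))"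
    and "r \<equiv> (\<lambda>n::nat. nrm b ^ n / nrm b / nrm a ^ n)"
    and "l \<equiv> (\<lambda>n::nat. if n = 0 then 0 else nrm a ^ (n - 1) / nrm b ^ n)"
  shows "(UNIV - {P}) - ((\<Union>i\<in>{1..}. psphere nrm (r i) 0) \<union> (\<Union>j. psphere nrm (l j) P))
           \<subseteq> basin nrm f P 0"
proof -
  have N: "nonarch_abs nrm" using assms(2) unfolding is_Cp_def by blast
  define \<alpha> where "\<alpha> = nrm a"
  define \<beta> where "\<beta> = nrm b"
  have a0: "\<alpha> > 0" using na_ge0[OF N, of a] na_zero[OF N, of a] assms(3) unfolding \<alpha>_def by linarith
  have ab: "\<alpha> < \<beta>" using assms(6) unfolding \<alpha>_def \<beta>_def .
  have b0: "\<beta> > 0" using a0 ab by linarith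
  have nP: "nrm P = 1 / \<beta>" unfolding P_def \<beta>_def using na_div[OF N, of "-1" b] na_minus[OF N, of 1] na_one[OF N] by simp
  have fx: "nrm (f x) = \<alpha> * nrm x ^ 2 / (\<beta> * nrm (x - P))" if "x \<noteq> P" for x
  proof -
    have "b * x + 1 = b * (x - P)" unfolding P_def using assms(4) by (simp add: field_simps)
    then have "f x = a * x ^ 2 / (b * (x - P))" unfolding f_def by simp
    then show ?thesis unfolding \<alpha>_def \<beta>_def
      by (simp add: na_div[OF N] na_mult[OF N] power2_eq_square)
  qed
  define good where "good x \<longleftrightarrow> (\<forall>n. (f ^^ n) x \<noteq> P) \<and> (\<lambda>n. nrm ((f ^^ n) x - 0)) \<longlonglongrightarrow> 0" for x
  have shift: "good x" if "x \<noteq> P" "good (f x)" for x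
  proof -
    have "\<forall>n. (f ^^ n) x \<noteq> P"
    proof
      fix n show "(f ^^ n) x \<noteq> P"
        using that good_def by (cases n) (auto simp: funpow_Suc_right simp del: funpow.simps)
    qed
    moreover have "(\<lambda>n. nrm ((f ^^ Suc n) x - 0)) \<longlonglongrightarrow> 0"
      using that(2) unfolding good_def by (simp add: funpow_Suc_right del: funpow.simps)
    then have "(\<lambda>n. nrm ((f ^^ n) x - 0)) \<longlonglongrightarrow> 0"
      using filterlim_sequentially_Suc[of "\<lambda>n. nrm ((f ^^ n) x - 0)"] by simp
    ultimately show ?thesis unfolding good_def by blast
  qed
  define q where "q = \<alpha> / \<beta>"
  have q0: "0 < q" "q < 1" unfolding q_def using a0 b0 ab by auto
  have far: "nrm (f x) = q * nrm x" if "nrm x > 1 / \<beta>" for x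
  proof -
    have "x \<noteq> P" using that nP by auto
    moreover have "nrm (x - P) = nrm x" using na_diff[OF N, of x P] that nP by auto
    moreover have "nrm x > 0" using that b0 by (smt (verit) divide_pos_pos)
    ultimately show ?thesis using fx unfolding q_def by (simp add: power2_eq_square)
  qed
  have G: "good x" if "nrm x < 1 / \<beta>" for x
  proof -
    have H: "nrm ((f ^^ n) x) \<le> q ^ n * nrm x \<and> nrm ((f ^^ n) x) < 1 / \<beta>" for n
    proof (induction n)
      case 0 then show ?case using that by simp
    next
      case (Suc n)
      define y where "y = (f ^^ n) x"
      have y1: "nrm y < 1 / \<beta>" "nrm y \<le> q ^ n * nrm x" using Suc y_def by auto
      have y0: "nrm y \<ge> 0" using na_ge0[OF N] by blast
      have "y \<noteq> P" using y1 nP by auto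
      moreover have "nrm (y - P) = 1 / \<beta>" using na_diff[OF N, of y P] y1 nP by auto
      ultimately have e: "nrm (f y) = \<alpha> * nrm y * nrm y" using fx b0 by (simp add: power2_eq_square)
      have "\<alpha> * nrm y * nrm y \<le> \<alpha> * (1 / \<beta>) * nrm y"
        using y1 y0 a0 by (intro mult_right_mono mult_left_mono) auto
      then have le: "nrm (f y) \<le> q * nrm y" using e unfolding q_def by simp
      also have "\<dots> \<le> nrm y" using q0 y0 by (simp add: mult_left_le_one_le)
      finally have "nrm (f y) < 1 / \<beta>" using y1 by simp
      moreover have "q * nrm y \<le> q * (q ^ n * nrm x)" using y1 q0 by simp
      ultimately show ?case using le unfolding y_def by simp
    qed
    have "\<forall>n. (f ^^ n) x \<noteq> P" using H nP by (metis less_irrefl)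
    moreover have "(\<lambda>n. nrm ((f ^^ n) x - 0)) \<longlonglongrightarrow> 0"
    proof (rule tendsto_sandwich[of "\<lambda>_. 0" _ _ "\<lambda>n. q ^ n * nrm x"])
      show "\<forall>\<^sub>F n in sequentially. 0 \<le> nrm ((f ^^ n) x - 0)" using na_ge0[OF N] by simp
      show "\<forall>\<^sub>F n in sequentially. nrm ((f ^^ n) x - 0) \<le> q ^ n * nrm x" using H by simp
      show "(\<lambda>n. 0) \<longlonglongrightarrow> (0::real)" by simp
      have "(\<lambda>n. q ^ n) \<longlonglongrightarrow> 0" using q0 by (intro LIMSEQ_power_zero) simp
      then show "(\<lambda>n. q ^ n * nrm x) \<longlonglongrightarrow> 0" by (rule tendsto_mult_left_zero)
    qed
    ultimately show ?thesis unfolding good_def by blast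
  qed
  have rS: "q * r (Suc i) = r i" for i
    unfolding q_def r_def \<alpha>_def[symmetric] \<beta>_def[symmetric] using a0 b0 by (simp add: field_simps)
  have r0: "r 0 = 1 / \<beta>" unfolding r_def \<beta>_def by simp
  have r1: "r 1 = 1 / \<alpha>" unfolding r_def \<beta>_def \<alpha>_def using b0 \<beta>_def by simp
  have FN: "\<forall>x. 1 / \<beta> < nrm x \<and> nrm x < r N \<and> (\<forall>i\<ge>1. nrm x \<noteq> r i) \<longrightarrow> good x" for N
  proof (induction N)
    case 0 then show ?case using r0 by auto
  next
    case (Suc N)
    show ?case
    proof (intro allI impI)
      fix x assume x: "1 / \<beta> < nrm x \<and> nrm x < r (Suc N) \<and> (\<forall>i\<ge>1. nrm x \<noteq> r i)"
      have xP: "x \<noteq> P" using x nP by auto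
      have e: "nrm (f x) = q * nrm x" using far x by blast
      show "good x"
      proof (cases "nrm x < r 1")
        case True
        have "q * nrm x < q * r 1" using True q0 by simp
        then have "nrm (f x) < 1 / \<beta>" using e rS[of 0] r0 by simp
        then show ?thesis using G shift xP by blast
      next
        case False
        then have gt: "nrm x > r 1" using x by force
        have "q * nrm x > q * r 1" using gt q0 by simp
        then have c1: "1 / \<beta> < nrm (f x)" using e rS[of 0] r0 by simp
        have "q * nrm x < q * r (Suc N)" using x q0 by simp
        then have c2: "nrm (f x) < r N" using e rS by simp
        have c3: "nrm (f x) \<noteq> r i" if "i \<ge> 1" for i
        proof
          assume "nrm (f x) = r i"
          then have "q * nrm x = q * r (Suc i)" using e rS by simp
          then have "nrm x = r (Suc i)" using q0 by simp
          then show False using x by auto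
        qed
        have "good (f x)" using Suc.IH c1 c2 c3 by blast
        then show ?thesis using shift xP by blast
      qed
    qed
  qed
  have unb: "\<exists>N. t < r N" for t
  proof -
    have "1 < \<beta> / \<alpha>" using a0 ab by simp
    then obtain N where "t * \<beta> < (\<beta> / \<alpha>) ^ N" using real_arch_pow by blast
    moreover have "r N = (\<beta> / \<alpha>) ^ N / \<beta>"
      unfolding r_def \<alpha>_def[symmetric] \<beta>_def[symmetric] by (simp add: power_divide)
    ultimately show ?thesis using b0 by (metis pos_less_divide_eq)
  qed
  have F: "good x" if "1 / \<beta> < nrm x" "\<forall>i\<ge>1. nrm x \<noteq> r i" for x
    using FN unb that by blast
  have l2: "l 2 = \<alpha> / \<beta> ^ 2" unfolding l_def \<alpha>_def \<beta>_def by simp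
  have l1: "l 1 = 1 / \<beta>" unfolding l_def \<beta>_def by simp
  have near: "good x" if s: "0 < nrm (x - P)" "nrm (x - P) < 1 / \<beta>" "\<forall>j\<ge>2. nrm (x - P) \<noteq> l j" for x
  proof -
    define s where "s = nrm (x - P)"
    have xP: "x \<noteq> P" using that(1) na_zero[OF N, of 0] by auto
    have "nrm (x - P + P) = nrm P" using na_strict[OF N, of "x - P" P] that nP by simp
    then have nx: "nrm x = 1 / \<beta>" using nP by simp
    have e: "nrm (f x) = \<alpha> / (\<beta> ^ 3 * s)" using fx[OF xP] nx unfolding s_def
      by (simp add: power2_eq_square power3_eq_cube field_simps)
    have sp: "s > 0" using that s_def by simp
    show ?thesis
    proof (cases "s > l 2")
      case True
      then have "\<alpha> < \<beta>^2 * s" using l2 b0 by (simp add: field_simps)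
      then have "\<alpha> / (\<beta> ^ 3 * s) < 1 / \<beta>" using b0 sp by (simp add: field_simps power3_eq_cube power2_eq_square)
      then show ?thesis using G shift xP e by auto
    next
      case False
      then have "s < l 2" using that s_def by force
      then have "\<alpha> > \<beta>^2 * s" using l2 b0 by (simp add: field_simps)
      then have c1: "\<alpha> / (\<beta> ^ 3 * s) > 1 / \<beta>" using b0 sp by (simp add: field_simps power3_eq_cube power2_eq_square)
      have c2: "nrm (f x) \<noteq> r i" if "i \<ge> 1" for i
      proof
        assume "nrm (f x) = r i"
        then have "\<alpha> / (\<beta> ^ 3 * s) = \<beta> ^ i / \<beta> / \<alpha> ^ i" using e unfolding r_def \<alpha>_def \<beta>_def by simp
        then have "s = \<alpha> ^ (i+1) / \<beta> ^ (i+2)" using a0 b0 sp by (simp add: field_simps power3_eq_cube)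
        moreover have "l (i+2) = \<alpha> ^ (i+1) / \<beta> ^ (i+2)" unfolding l_def \<alpha>_def \<beta>_def by simp
        ultimately show False using s(3) s_def by (metis le_add2)
      qed
      have "good (f x)" using F c1 c2 e by simp
      then show ?thesis using shift xP by blast
    qed
  qed
  show ?thesis
  proof
    fix x assume xin: "x \<in> (UNIV - {P}) - ((\<Union>i\<in>{1..}. psphere nrm (r i) 0) \<union> (\<Union>j. psphere nrm (l j) P))"
    have xP: "x \<noteq> P" using xin by blast
    have nr: "\<forall>i\<ge>1. nrm x \<noteq> r i" using xin unfolding psphere_def by auto
    have nl: "\<forall>j. nrm (x - P) \<noteq> l j" using xin unfolding psphere_def by auto
    have "good x"
    proof (cases "nrm x < 1 / \<beta>")
      case True then show ?thesis using G by blast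
    next
      case False
      show ?thesis
      proof (cases "nrm x > 1 / \<beta>")
        case True then show ?thesis using F nr by blast
      next
        case False2: False
        have nx: "nrm x = 1 / \<beta>" using False False2 by linarith
        have "nrm (x + - P) \<le> max (nrm x) (nrm (- P))" by (rule na_tri[OF N])
        then have le: "nrm (x - P) \<le> 1 / \<beta>" using nx nP na_minus[OF N] by simp
        have "nrm (x - P) \<noteq> 1 / \<beta>" using nl l1 by metis
        moreover have "nrm (x - P) > 0" using xP na_zero[OF N, of "x - P"] na_ge0[OF N, of "x - P"] by simp
        ultimately show ?thesis using near le nl by force
      qed
    qed
    then show "x \<in> basin nrm f P 0" unfolding good_def basin_def by simp
  qed
qed

end
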